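(* Fix $k\in\mathbb N$ and a real $s>1$. For every $\varepsilon>0$ there exists $\eta>0$ such that, for all sufficiently large $P$, all $R$ with $2\le R\le P^\eta$, all $Q$ with $1\le Q\le P^{k/2}$, all $M\ge R$ and all integers $q$ with $1\le q\le Q$, one has \[ \int_{\mathfrak N_q(Q,P)}|f(\alpha;P,R)|^s\,d\alpha\ll (MR)^{s-1}I_q(M;\mathfrak N)+QM^sP^{\varepsilon-k}, \] and likewise \[ \int_{\mathfrak M_q(Q,P)}|f(\alpha;P,R)|^s\,d\alpha\ll (MR)^{s-1}I_q(M;\mathfrak M)+QM^sP^{\varepsilon-k}, \] with implied constants depending only on $\varepsilon,\eta,k,s$.
   Context: For real $P,R\ge1$, $\mathscr A(P,R)$ is the set of integers $n\in[1,P]$ all of whose prime divisors are at most $R$; $e(z)=e^{2\pi iz}$; $f(\alpha;P,R)=\sum_{x\in\mathscr A(P,R)}e(\alpha x^k)$. For $q\in\mathbb N$, $u\mid q^\infty$ means every prime dividing $u$ divides $q$, and $\mathscr C_q(P,R)=\{n\in\mathscr A(P,R):n\mid q^\infty\}$. For a prime $\pi$, $\mathscr B(M,\pi,R)$ is the set of $v\in\mathscr A(M\pi,R)$ with $v>M$, $\pi\mid v$, and all prime divisors of $v$ at least $\pi$. Put $g^*_{q,\pi}(\alpha;P,m,R)=\sum_{w\in\mathscr A(P/m,\pi),\ (w,q)=1}\sum_{u\in\mathscr C_q(P/(mw),R)}e(\alpha(wu)^k)$. For $q\le Q$, $\mathfrak M_q(Q,P)$ is the union over $0\le a\le q$, $(a,q)=1$,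 of $\{\alpha\in[0,1):|q\alpha-a|\le QP^{-k}\}$ (empty if $q>Q$), and $\mathfrak N_q(Q,P)=\mathfrak M_q(Q,P)\setminus\mathfrak M_q(Q/2,P)$. For $\mathfrak B\in\{\mathfrak M,\mathfrak N\}$ define \[ I_q(M;\mathfrak B)=\sum_{\pi\le R}\ \sum_{\substack{m\in\mathscr B(M,\pi,R)\\(m,q)=1}}\int_{\mathfrak B_q(Q,P)}|g^*_{q,\pi}(\alpha m^k;P,m,R)|^s\,d\alpha, \] with $\pi$ running over primes. *)

theory Defs
  imports "HOL-Analysis.Analysis" "HOL-Computational_Algebra.Primes"
begin

definition e :: "real \<Rightarrow> complex" where
  "e z = exp (2 * pi * \<i> * complex_of_real z)"

definition smooth :: "real \<Rightarrow> real \<Rightarrow> nat set" where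
  "smooth P R = {n::nat. 1 \<le> n \<and> real n \<le> P \<and> (\<forall>p. prime p \<and> p dvd n \<longrightarrow> real p \<le> R)}"

definition fsum :: "nat \<Rightarrow> real \<Rightarrow> real \<Rightarrow> real \<Rightarrow> complex" where
  "fsum k \<alpha> P R = (\<Sum>x\<in>smooth P R. e (\<alpha> * real x ^ k))"

definition dvd_inf :: "nat \<Rightarrow> nat \<Rightarrow> bool" where
  "dvd_inf u q \<longleftrightarrow> (\<forall>p. prime p \<and> p dvd u \<longrightarrow> p dvd q)"

definition Cset :: "nat \<Rightarrow> real \<Rightarrow> real \<Rightarrow> nat set" where
  "Cset q P R = {n \<in> smooth P R. dvd_inf n q}"

definition Bset :: "real \<Rightarrow> nat \<Rightarrow> real \<Rightarrow> nat set" where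
  "Bset M \<pi> R = {v \<in> smooth (M * real \<pi>) R. real v > M \<and> \<pi> dvd v \<and>
                   (\<forall>p. prime p \<and> p dvd v \<longrightarrow> \<pi> \<le> p)}"

definition gstar :: "nat \<Rightarrow> nat \<Rightarrow> nat \<Rightarrow> real \<Rightarrow> real \<Rightarrow> nat \<Rightarrow> real \<Rightarrow> complex" where
  "gstar k q \<pi> \<alpha> P m R =
     (\<Sum>w\<in>{w \<in> smooth (P / real m) (real \<pi>). coprime w q}.
        \<Sum>u\<in>Cset q (P / (real m * real w)) R. e (\<alpha> * (real w * real u) ^ k))"

definition Marc :: "nat \<Rightarrow> nat \<Rightarrow> real \<Rightarrow> real \<Rightarrow> real set" where
  "Marc k q Q P = (if real q \<le> Q then
     {\<alpha>. 0 \<le> \<alpha> \<and> \<alpha> < 1 \<and> (\<exists>a::nat. a \<le> q \<and> coprime a q \<and>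
        \<bar>real q * \<alpha> - real a\<bar> \<le> Q * P powr (- real k))} else {})"

definition Narc :: "nat \<Rightarrow> nat \<Rightarrow> real \<Rightarrow> real \<Rightarrow> real set" where
  "Narc k q Q P = Marc k q Q P - Marc k q (Q / 2) P"

text \<open>I_q(M; B), where the arc family is passed as a function (Marc or Narc)\<close>
definition Iq :: "nat \<Rightarrow> real \<Rightarrow> (nat \<Rightarrow> nat \<Rightarrow> real \<Rightarrow> real \<Rightarrow> real set)
                   \<Rightarrow> nat \<Rightarrow> real \<Rightarrow> real \<Rightarrow> real \<Rightarrow> real \<Rightarrow> real" where
  "Iq k s Arc q Q P R M =
     (\<Sum>\<pi>\<in>{p::nat. prime p \<and> real p \<le> R}.
        \<Sum>m\<in>{m \<in> Bset M \<pi> R. coprime m q}.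
          (LINT \<alpha>:Arc k q Q P|lborel. cmod (gstar k q \<pi> (\<alpha> * real m ^ k) P m R) powr s))"

end

theory Submission
  imports Defs
begin


lemma power_mean_sum:
  fixes b :: "'a \<Rightarrow> real"
  assumes "finite I" "\<And>i. i \<in> I \<Longrightarrow> b i \<ge> 0" "s \<ge> 1"
  shows "(\<Sum>i\<in>I. b i) powr s \<le> real (card I) powr (s - 1) * (\<Sum>i\<in>I. b i powr s)"
proof -
  define J where "J = {i\<in>I. b i > 0}"
  have fJ: "finite J" using assms(1) J_def by auto
  have s1: "(\<Sum>i\<in>I. b i) = (\<Sum>i\<in>J. b i)"
    unfolding J_def using assms by (intro sum.mono_neutral_right) force+
  have s2: "(\<Sum>i\<in>I. b i powr s) = (\<Sum>i\<in>J. b i powr s)"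
    unfolding J_def using assms by (intro sum.mono_neutral_right) force+
  have cJ: "card J \<le> card I" unfolding J_def using assms(1) by (intro card_mono) auto
  show ?thesis
  proof (cases "J = {}")
    case True then show ?thesis using s1 s2 by simp
  next
    case False
    define n where "n = real (card J)"
    have n0: "n > 0" using False fJ n_def by (simp add: card_gt_0_iff)
    have "(\<lambda>x. x powr s) (\<Sum>i\<in>J. (1/n) *\<^sub>R b i) \<le> (\<Sum>i\<in>J. (1/n) * (b i powr s))"
      apply (rule convex_on_sum[OF fJ False powr_convex[OF assms(3)]])
      using n0 by (auto simp: n_def J_def)
    hence "((\<Sum>i\<in>J. b i) / n) powr s \<le> (\<Sum>i\<in>J. b i powr s) / n"
      by (simp add: sum_distrib_left[symmetric] sum_divide_distrib[symmetric] divide_inverse mult.commute)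
    hence "(\<Sum>i\<in>J. b i) powr s / n powr s \<le> (\<Sum>i\<in>J. b i powr s) / n"
      using n0 by (simp add: powr_divide sum_nonneg J_def)
    hence "(\<Sum>i\<in>J. b i) powr s \<le> n powr s * ((\<Sum>i\<in>J. b i powr s) / n)"
      using n0 by (simp add: divide_le_eq mult.commute)
    also have "n powr s * ((\<Sum>i\<in>J. b i powr s) / n) = n powr (s-1) * (\<Sum>i\<in>J. b i powr s)"
      using n0 by (simp add: powr_diff)
    also have "\<dots> \<le> real (card I) powr (s-1) * (\<Sum>i\<in>J. b i powr s)"
      apply (rule mult_right_mono)
      using n0 cJ assms(3) by (auto simp: n_def intro!: powr_mono2 sum_nonneg)
    finally show ?thesis using s1 s2 by simp
  qed
qed



definition sF :: "nat set \<Rightarrow> real \<Rightarrow> nat set" where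
  "sF F X = {u::nat. 1 \<le> u \<and> real u \<le> X \<and> (\<forall>p. prime p \<and> p dvd u \<longrightarrow> p \<in> F)}"

lemma sF_finite: "finite (sF F X)"
proof -
  have "sF F X \<subseteq> {..nat \<lfloor>X\<rfloor>}" unfolding sF_def
    by (auto simp: le_nat_floor)
  then show ?thesis using finite_subset by blast
qed

lemma geom_bound:
  fixes r :: real assumes "0 \<le> r" "r < 1"
  shows "(\<Sum>e\<le>N. r ^ e) \<le> 1 / (1 - r)"
proof -
  have "(\<Sum>e\<le>N. r ^ e) = (\<Sum>e<Suc N. r ^ e)" by (simp add: lessThan_Suc_atMost)
  also have "\<dots> = (1 - r ^ Suc N) / (1 - r)" using assms by (subst sum_gp_strict) auto
  also have "\<dots> \<le> 1 / (1 - r)" using assms by (intro divide_right_mono) auto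
  finally show ?thesis .
qed

lemma rankin:
  assumes "finite F" "\<forall>p\<in>F. prime p" "\<delta> > 0"
  shows "X \<ge> 0 \<Longrightarrow> real (card (sF F X)) \<le> (\<Prod>p\<in>F. 1 / (1 - real p powr (-\<delta>))) * X powr \<delta>"
  using assms(1,2)
proof (induction F arbitrary: X rule: finite_induct)
  case empty
  show ?case
  proof (cases "X \<ge> 1")
    case True
    have "sF {} X \<subseteq> {1}" unfolding sF_def
      using prime_factor_nat by fastforce
    then have "card (sF {} X) \<le> card {1::nat}" by (intro card_mono) auto
    then have "card (sF {} X) \<le> 1" by simp
    moreover have "1 \<le> X powr \<delta>" using True assms(3) by (simp add: ge_one_powr_ge_zero)
    ultimately show ?thesis by simp
  next
    case False
    then have "sF {} X = {}" unfolding sF_def by auto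
    then show ?thesis using empty by simp
  qed
next
  case (insert p F)
  have pp: "prime p" using insert by auto
  have p2: "real p \<ge> 2" using prime_ge_2_nat[OF pp] by simp
  define r where "r = real p powr (-\<delta>)"
  have r0: "0 \<le> r" and r1: "r < 1" unfolding r_def using p2 assms(3)
    by (auto intro!: powr_less_one)
  define c where "c = (\<Prod>p\<in>F. 1 / (1 - real p powr (-\<delta>)))"
  define N where "N = nat \<lfloor>X\<rfloor>"
  have Fl: "\<forall>a\<in>F. real a powr (-\<delta>) < 1"
  proof
    fix a assume "a \<in> F"
    then have "real a \<ge> 2" using insert prime_ge_2_nat by auto
    then show "real a powr (-\<delta>) < 1" using assms(3) by (intro powr_less_one) auto
  qed
  have sub: "sF (insert p F) X \<subseteq> (\<Union>e\<in>{..N}. (\<lambda>u. p ^ e * u) ` sF F (X / real p ^ e))"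
  proof
    fix u assume u: "u \<in> sF (insert p F) X"
    then have u1: "u \<ge> 1" and uX: "real u \<le> X" and up: "\<forall>q. prime q \<and> q dvd u \<longrightarrow> q \<in> insert p F"
      unfolding sF_def by auto
    define e where "e = multiplicity p u"
    define u' where "u' = u div p ^ e"
    have dv: "p ^ e dvd u" unfolding e_def by (rule multiplicity_dvd)
    have ueq: "u = p ^ e * u'" unfolding u'_def using dv by simp
    have nd: "\<not> p dvd u'" unfolding u'_def e_def using u1 pp
      by (intro multiplicity_decompose) auto
    have u'1: "u' \<ge> 1" using ueq u1 by (cases "u' = 0") auto
    have "p ^ e \<le> u" using dv u1 by (intro dvd_imp_le) auto
    hence "real (p ^ e) \<le> real u" by (simp only: of_nat_le_iff)
    hence pe: "real p ^ e \<le> X" using uX by (metis of_nat_power order_trans)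
    have "e < 2 ^ e" by (rule less_exp)
    hence "real e < 2 ^ e" by (metis of_nat_less_iff of_nat_numeral of_nat_power)
    also have "(2::real) ^ e \<le> real p ^ e" using p2 by (intro power_mono) auto
    finally have "real e < real p ^ e" .
    hence "real e \<le> X" using pe by linarith
    hence eN: "e \<le> N" unfolding N_def by (simp add: le_nat_floor)
    have "real u' \<le> X / real p ^ e"
    proof -
      have "real p ^ e * real u' \<le> X" using ueq uX by (metis of_nat_mult of_nat_power)
      thus ?thesis using p2 by (simp add: field_simps)
    qed
    moreover have "\<forall>q. prime q \<and> q dvd u' \<longrightarrow> q \<in> F"
    proof (intro allI impI)
      fix q assume "prime q \<and> q dvd u'"
      then have "q \<in> insert p F" "q \<noteq> p" using up ueq nd by auto
      thus "q \<in> F" by auto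
    qed
    ultimately have "u' \<in> sF F (X / real p ^ e)" unfolding sF_def using u'1 by auto
    then show "u \<in> (\<Union>e\<in>{..N}. (\<lambda>u. p ^ e * u) ` sF F (X / real p ^ e))"
      using eN ueq by blast
  qed
  have "real (card (sF (insert p F) X)) \<le> real (card (\<Union>e\<in>{..N}. (\<lambda>u. p ^ e * u) ` sF F (X / real p ^ e)))"
    using sub by (intro of_nat_mono card_mono) (auto intro: sF_finite)
  also have "\<dots> \<le> real (\<Sum>e\<le>N. card ((\<lambda>u. p ^ e * u) ` sF F (X / real p ^ e)))"
    by (intro of_nat_mono card_UN_le) auto
  also have "\<dots> \<le> (\<Sum>e\<le>N. real (card (sF F (X / real p ^ e))))"
    unfolding of_nat_sum by (intro sum_mono of_nat_mono card_image_le sF_finite)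
  also have "\<dots> \<le> (\<Sum>e\<le>N. c * (X / real p ^ e) powr \<delta>)"
    apply (intro sum_mono)
    unfolding c_def using insert p2 by (intro insert.IH) auto
  also have "\<dots> = (\<Sum>e\<le>N. c * X powr \<delta> * r ^ e)"
  proof (intro sum.cong refl)
    fix e
    have "(X / real p ^ e) powr \<delta> = X powr \<delta> / (real p ^ e) powr \<delta>"
      using insert p2 by (simp add: powr_divide)
    also have "(real p ^ e) powr \<delta> = real p powr (real e * \<delta>)"
      using p2 by (simp add: powr_realpow[symmetric] powr_powr)
    also have "real p powr (real e * \<delta>) = 1 / r ^ e"
      unfolding r_def using p2 by (simp add: powr_power powr_minus divide_inverse power_inverse mult.commute)
    finally show "c * (X / real p ^ e) powr \<delta> = c * X powr \<delta> * r ^ e" by simp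
  qed
  also have "\<dots> = c * X powr \<delta> * (\<Sum>e\<le>N. r ^ e)" by (simp add: sum_distrib_left)
  also have "\<dots> \<le> c * X powr \<delta> * (1 / (1 - r))"
    using Fl apply (intro mult_left_mono geom_bound r0 r1)
    unfolding c_def using r1 insert assms(3) p2
    by (auto intro!: prod_nonneg mult_nonneg_nonneg simp: field_simps powr_less_one)
  also have "\<dots> = (\<Prod>p\<in>insert p F. 1 / (1 - real p powr (-\<delta>))) * X powr \<delta>"
    using insert unfolding c_def r_def by simp
  finally show ?case .
qed



lemma prod_pf_le: "(q::nat) > 0 \<Longrightarrow> (\<Prod>p\<in>prime_factors q. p) \<le> q"
proof -
  assume q: "q > 0"
  have "(\<Prod>p\<in>prime_factors q. p) \<le> (\<Prod>p\<in>prime_factors q. p ^ multiplicity p q)"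
  proof (intro prod_mono conjI)
    fix p assume p: "p \<in> prime_factors q"
    then have "multiplicity p q > 0" using prime_factors_multiplicity by blast
    then show "p \<le> p ^ multiplicity p q" using p
      by (metis in_prime_factors_imp_prime not_gr0 power_increasing power_one_right prime_gt_0_nat Suc_leI One_nat_def)
  qed auto
  also have "\<dots> = q" using prime_factorization_nat[OF q] by simp
  finally show ?thesis .
qed

lemma prod_factor_bound:
  assumes "\<delta> > 0" "(q::nat) > 0"
  defines "B \<equiv> 1 / (1 - 2 powr (-\<delta>))" and "T \<equiv> nat \<lceil>2 powr (1/\<delta>)\<rceil>"
  shows "(\<Prod>p\<in>prime_factors q. 1 / (1 - real p powr (-\<delta>))) \<le> B ^ T * real q powr \<delta>"
proof -
  define F where "F = prime_factors q"
  have fF: "finite F" unfolding F_def by simp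
  have Fp: "\<And>p. p \<in> F \<Longrightarrow> prime p" unfolding F_def by auto
  have B1: "B \<ge> 1" unfolding B_def using assms(1)
    by (auto simp: field_simps powr_less_one intro!: divide_le_eq_1_pos[THEN iffD2] )
  define h where "h p = (if real p powr \<delta> \<ge> 2 then 1 else B)" for p :: nat
  have each: "1 / (1 - real p powr (-\<delta>)) \<le> real p powr \<delta> * h p" if "p \<in> F" for p
  proof -
    have p2: "real p \<ge> 2" using Fp[OF that] prime_ge_2_nat by auto
    have pd: "real p powr (-\<delta>) = 1 / real p powr \<delta>" by (simp add: powr_minus divide_inverse)
    have ppos: "real p powr \<delta> \<ge> 1" using p2 assms(1) by (simp add: ge_one_powr_ge_zero)
    show ?thesis
    proof (cases "real p powr \<delta> \<ge> 2")
      case True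
      have "1 / (1 - real p powr (-\<delta>)) = real p powr \<delta> / (real p powr \<delta> - 1)"
        using ppos True p2 unfolding pd by (simp add: field_simps)
      also have "\<dots> \<le> real p powr \<delta>" using True p2 by (simp add: divide_le_eq)
      finally show ?thesis using True unfolding h_def by simp
    next
      case False
      have "2 powr \<delta> \<le> real p powr \<delta>" using p2 assms(1) by (intro powr_mono2) auto
      hence "2 powr (-\<delta>) \<ge> real p powr (-\<delta>)" using p2 by (simp add: powr_minus)
      moreover have "real p powr (-\<delta>) < 1" using p2 assms(1) by (intro powr_less_one) auto
      moreover have "(2::real) powr (-\<delta>) < 1" using assms(1) by (intro powr_less_one) auto
      ultimately have "1 / (1 - real p powr (-\<delta>)) \<le> B" unfolding B_def
        by (intro divide_left_mono) auto
      also have "B \<le> real p powr \<delta> * B" using ppos B1 by simp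
      finally show ?thesis using False unfolding h_def by simp
    qed
  qed
  have "(\<Prod>p\<in>F. 1 / (1 - real p powr (-\<delta>))) \<le> (\<Prod>p\<in>F. real p powr \<delta> * h p)"
  proof (intro prod_mono conjI each)
    fix p assume "p \<in> F"
    then have p2: "real p \<ge> 2" using Fp prime_ge_2_nat by auto
    have "real p powr (-\<delta>) < 1" using p2 assms(1) by (intro powr_less_one) auto
    then show "0 \<le> 1 / (1 - real p powr (-\<delta>))" by simp
  qed
  also have "\<dots> = (\<Prod>p\<in>F. real p powr \<delta>) * (\<Prod>p\<in>F. h p)" by (simp add: prod.distrib)
  finally have st: "(\<Prod>p\<in>F. 1 / (1 - real p powr (-\<delta>))) \<le> (\<Prod>p\<in>F. real p powr \<delta>) * (\<Prod>p\<in>F. h p)" .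
  have "(\<Prod>p\<in>F. h p) = (\<Prod>p\<in>{p\<in>F. real p powr \<delta> < 2}. B)"
    unfolding h_def using fF by (intro prod.mono_neutral_cong_right) auto
  also have "\<dots> = B ^ card {p\<in>F. real p powr \<delta> < 2}" by simp
  also have "\<dots> \<le> B ^ T"
  proof (intro power_increasing B1)
    have "{p\<in>F. real p powr \<delta> < 2} \<subseteq> {..<T}"
    proof
      fix p assume "p \<in> {p\<in>F. real p powr \<delta> < 2}"
      then have "p \<in> F" "real p powr \<delta> < 2" by auto
      then have p2: "real p \<ge> 2" using Fp prime_ge_2_nat by auto
      have "real p = (real p powr \<delta>) powr (1/\<delta>)" using assms(1) p2 by (simp add: powr_powr)
      also have "\<dots> < 2 powr (1/\<delta>)" using \<open>real p powr \<delta> < 2\<close> assms(1) p2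
        by (intro powr_less_mono2) auto
      finally have "real p < 2 powr (1/\<delta>)" .
      then have "real p < real_of_int \<lceil>2 powr (1/\<delta>)\<rceil>" using le_of_int_ceiling[of "2 powr (1/\<delta>)"] by linarith
      then have "int p < \<lceil>2 powr (1/\<delta>)\<rceil>" by (metis of_int_less_iff of_int_of_nat_eq)
      then show "p \<in> {..<T}" unfolding T_def by (simp add: zless_nat_eq_int_zless)
    qed
    then show "card {p\<in>F. real p powr \<delta> < 2} \<le> T"
      by (metis card_lessThan card_mono finite_lessThan)
  qed
  finally have h1: "(\<Prod>p\<in>F. h p) \<le> B ^ T" .
  have "(\<Prod>p\<in>F. real p powr \<delta>) = real (\<Prod>p\<in>F. p) powr \<delta>"
    by (simp add: prod_powr_distrib of_nat_prod)
  also have "\<dots> \<le> real q powr \<delta>"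
    using prod_pf_le[OF assms(2)] assms(1) unfolding F_def
    by (intro powr_mono2) (auto simp del: of_nat_prod)
  finally have h2: "(\<Prod>p\<in>F. real p powr \<delta>) \<le> real q powr \<delta>" .
  have h0: "0 \<le> (\<Prod>p\<in>F. h p)" unfolding h_def using B1 by (intro prod_nonneg) auto
  have "(\<Prod>p\<in>F. real p powr \<delta>) * (\<Prod>p\<in>F. h p) \<le> real q powr \<delta> * B ^ T"
    using h1 h2 h0 by (intro mult_mono) auto
  with st show ?thesis unfolding F_def by (simp add: mult.commute)
qed



lemma coprime_by_primes:
  fixes a b :: nat
  assumes "\<And>r. prime r \<Longrightarrow> r dvd a \<Longrightarrow> r dvd b \<Longrightarrow> False"
  shows "coprime a b"
proof (rule ccontr)
  assume "\<not> coprime a b"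
  then have "gcd a b \<noteq> 1" by (simp add: coprime_iff_gcd_eq_1)
  then obtain r where "prime r" "r dvd gcd a b" using prime_factor_nat by blast
  then show False using assms by auto
qed

lemma qsplit_exists:
  fixes x q :: nat
  shows "x > 0 \<Longrightarrow> \<exists>v u. x = v * u \<and> coprime v q \<and> dvd_inf u q"
proof (induction x rule: less_induct)
  case (less x)
  show ?case
  proof (cases "x = 1")
    case True
    have "dvd_inf 1 q" unfolding dvd_inf_def by auto
    then show ?thesis using True by (intro exI[of _ 1]) auto
  next
    case False
    then obtain p where p: "prime p" "p dvd x" using prime_factor_nat by blast
    then obtain y where y: "x = p * y" by blast
    have y0: "y > 0" using less.prems y by (cases "y = 0") auto
    have "y < x" using y y0 prime_ge_2_nat[OF p(1)] by simp
    then obtain v u where vu: "y = v * u" "coprime v q" "dvd_inf u q" using less.IH y0 by blast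
    show ?thesis
    proof (cases "p dvd q")
      case True
      have "dvd_inf (p * u) q" unfolding dvd_inf_def
      proof (intro allI impI)
        fix r assume r: "prime r \<and> r dvd p * u"
        then have "r dvd p \<or> r dvd u" using prime_dvd_mult_iff by blast
        then show "r dvd q"
        proof
          assume "r dvd p" then have "r = p" using r p by (simp add: primes_dvd_imp_eq)
          then show ?thesis using True by simp
        next
          assume "r dvd u" then show ?thesis using vu r unfolding dvd_inf_def by blast
        qed
      qed
      then show ?thesis using vu y by (intro exI[of _ v] exI[of _ "p * u"]) auto
    next
      case False
      have "coprime p q" using prime_imp_coprime[OF p(1) False] .
      then have "coprime (p * v) q" using vu by simp
      then show ?thesis using vu y by (intro exI[of _ "p * v"] exI[of _ u]) auto
    qed
  qed
qed

lemma qsplit_unique: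
  fixes v u v' u' q :: nat
  assumes "v * u = v' * u'" "coprime v q" "coprime v' q" "dvd_inf u q" "dvd_inf u' q"
  shows "u = u'"
proof -
  have c1: "coprime u v'"
  proof (rule coprime_by_primes)
    fix r assume r: "prime r" "r dvd u" "r dvd v'"
    then have "r dvd q" using assms(4) unfolding dvd_inf_def by blast
    then have "r dvd 1" using r assms(3) by (meson coprime_common_divisor)
    then show False using r by auto
  qed
  have c2: "coprime u' v"
  proof (rule coprime_by_primes)
    fix r assume r: "prime r" "r dvd u'" "r dvd v"
    then have "r dvd q" using assms(5) unfolding dvd_inf_def by blast
    then have "r dvd 1" using r assms(2) by (meson coprime_common_divisor)
    then show False using r by auto
  qed
  have "u dvd v' * u'" using assms(1) by (metis dvd_triv_right)
  then have d1: "u dvd u'" using c1 by (simp add: coprime_dvd_mult_right_iff)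
  have "u' dvd v * u" using assms(1) by (metis dvd_triv_right)
  then have d2: "u' dvd u" using c2 by (simp add: coprime_dvd_mult_right_iff)
  show ?thesis using d1 d2 by (rule dvd_antisym)
qed

lemma decomp_exists:
  fixes v :: nat and M :: real
  assumes "M \<ge> 1"
  shows "real v > M \<Longrightarrow> \<exists>\<pi> m w. prime \<pi> \<and> \<pi> dvd m \<and> (\<forall>p. prime p \<and> p dvd m \<longrightarrow> \<pi> \<le> p)
      \<and> (\<forall>p. prime p \<and> p dvd w \<longrightarrow> p \<le> \<pi>) \<and> real m > M \<and> real m \<le> M * real \<pi> \<and> v = m * w"
proof (induction v rule: less_induct)
  case (less v)
  have v1: "v \<noteq> 1" using less.prems assms by auto
  define p where "p = (LEAST p. prime p \<and> p dvd v)"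
  have ex: "\<exists>p. prime p \<and> p dvd v" using prime_factor_nat[OF v1] by blast
  have pp: "prime p \<and> p dvd v" unfolding p_def using ex by (metis (mono_tags, lifting) LeastI)
  have pmin: "\<And>r. prime r \<Longrightarrow> r dvd v \<Longrightarrow> p \<le> r" unfolding p_def by (simp add: Least_le)
  obtain y where y: "v = p * y" using pp by blast
  have v0: "v > 0" using less.prems assms by (cases "v = 0") auto
  have y0: "y > 0" using v0 y by (cases "y = 0") auto
  have p2: "p \<ge> 2" using pp prime_ge_2_nat by blast
  show ?case
  proof (cases "real y > M")
    case True
    have "y < v" using y y0 p2 by simp
    then obtain \<pi> m w where H: "prime \<pi>" "\<pi> dvd m" "\<forall>p. prime p \<and> p dvd m \<longrightarrow> \<pi> \<le> p"
      "\<forall>p. prime p \<and> p dvd w \<longrightarrow> p \<le> \<pi>" "real m > M" "real m \<le> M * real \<pi>" "y = m * w"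
      using less.IH True by blast
    have "\<pi> dvd v" using H(2,7) y by (metis dvd_mult dvd_mult2 mult.commute)
    then have ppi: "p \<le> \<pi>" using pmin H(1) by blast
    have "\<forall>r. prime r \<and> r dvd (p * w) \<longrightarrow> r \<le> \<pi>"
    proof (intro allI impI)
      fix r assume r: "prime r \<and> r dvd p * w"
      then have "r dvd p \<or> r dvd w" using prime_dvd_mult_iff by blast
      then show "r \<le> \<pi>"
      proof
        assume "r dvd p" then have "r = p" using r pp by (simp add: primes_dvd_imp_eq)
        then show ?thesis using ppi by simp
      qed (use r H(4) in blast)
    qed
    then show ?thesis using H y by (intro exI[of _ \<pi>] exI[of _ m] exI[of _ "p * w"]) (auto simp: ac_simps)
  next
    case False
    have "real v = real p * real y" using y by simp
    also have "\<dots> \<le> real p * M" using False by (intro mult_left_mono) auto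
    finally have "real v \<le> M * real p" by (simp add: mult.commute)
    moreover have "\<forall>r. prime r \<and> r dvd v \<longrightarrow> p \<le> r" using pmin by blast
    moreover have "\<forall>r. prime r \<and> r dvd (1::nat) \<longrightarrow> r \<le> p" by auto
    ultimately show ?thesis using pp less.prems
      by (intro exI[of _ p] exI[of _ v] exI[of _ 1]) auto
  qed
qed

lemma du_lt:
  fixes m w m' w' \<pi> \<pi>' :: nat and M :: real
  assumes "m * w = m' * w'" "prime \<pi>" "prime \<pi>'" "\<pi> dvd m"
    "\<forall>p. prime p \<and> p dvd m' \<longrightarrow> \<pi>' \<le> p"
    "\<forall>p. prime p \<and> p dvd w \<longrightarrow> p \<le> \<pi>"
    "real m \<le> M * real \<pi>" "real m' > M" "M \<ge> 0" "\<pi> < \<pi>'" "real m > M"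
  shows False
proof -
  have c: "coprime m' w"
  proof (rule coprime_by_primes)
    fix r assume r: "prime r" "r dvd m'" "r dvd w"
    have "\<pi>' \<le> r" using assms(5) r by blast
    moreover have "r \<le> \<pi>" using assms(6) r by blast
    ultimately show False using assms(10) by linarith
  qed
  have "m' dvd m * w" using assms(1) by simp
  then have "m' dvd m" using c by (simp add: coprime_dvd_mult_left_iff)
  then obtain t where t: "m = m' * t" by blast
  have "\<not> \<pi> dvd m'"
  proof
    assume "\<pi> dvd m'" then have "\<pi>' \<le> \<pi>" using assms(2,5) by blast
    then show False using assms(10) by linarith
  qed
  then have "\<pi> dvd t" using assms(2,4) t by (simp add: prime_dvd_mult_iff)
  have m0: "m > 0" using assms(11,9) by (cases "m = 0") auto
  then have "t > 0" using t by (cases "t = 0") auto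
  then have "\<pi> \<le> t" using \<open>\<pi> dvd t\<close> by (simp add: dvd_imp_le)
  then have "real m' * real \<pi> \<le> real m' * real t" by (intro mult_left_mono) auto
  also have "\<dots> = real m" using t by simp
  finally have "real m' * real \<pi> \<le> M * real \<pi>" using assms(7) by linarith
  moreover have "real \<pi> > 0" using assms(2) prime_gt_0_nat by simp
  ultimately have "real m' \<le> M" by simp
  then show False using assms(8) by simp
qed

lemma du_aux:
  fixes m a m' b \<pi> :: nat and M :: real
  assumes "m * a = m' * b" "coprime a b" "b \<noteq> 1" "b > 0" "a > 0"
    "prime \<pi>"
    "\<forall>p. prime p \<and> p dvd m \<longrightarrow> \<pi> \<le> p" "\<forall>p. prime p \<and> p dvd m' \<longrightarrow> \<pi> \<le> p"
    "\<forall>p. prime p \<and> p dvd a \<longrightarrow> p \<le> \<pi>" "\<forall>p. prime p \<and> p dvd b \<longrightarrow> p \<le> \<pi>"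
    "real m \<le> M * real \<pi>" "real m' > M"
  shows False
proof -
  have cba: "coprime b a" using assms(2) by (simp add: coprime_commute)
  have "b dvd m * a" using assms(1) by simp
  then have bm: "b dvd m" using cba by (simp add: coprime_dvd_mult_left_iff)
  have "a dvd m' * b" using assms(1) by (metis dvd_triv_right)
  then have am: "a dvd m'" using assms(2) by (simp add: coprime_dvd_mult_left_iff)
  obtain r where r: "prime r" "r dvd b" using prime_factor_nat[OF assms(3)] by blast
  have "r dvd m" using r(2) bm by (rule dvd_trans)
  then have "\<pi> \<le> r" using r assms(7) by blast
  moreover have "r \<le> \<pi>" using r assms(10) by blast
  ultimately have "r = \<pi>" by linarith
  then have pb: "\<pi> dvd b" using r by simp
  have a1: "a = 1"
  proof (rule ccontr)
    assume "a \<noteq> 1"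
    then obtain r' where r': "prime r'" "r' dvd a" using prime_factor_nat by blast
    have "r' dvd m'" using r'(2) am by (rule dvd_trans)
    then have "\<pi> \<le> r'" using r' assms(8) by blast
    moreover have "r' \<le> \<pi>" using r' assms(9) by blast
    ultimately have "r' = \<pi>" by linarith
    then have "\<pi> dvd a" using r' by simp
    then have "\<pi> dvd 1" using pb assms(2) by (meson coprime_common_divisor)
    then show False using assms(6) by auto
  qed
  have "\<pi> \<le> b" using pb assms(4) by (simp add: dvd_imp_le)
  then have "real m' * real \<pi> \<le> real m' * real b" by (intro mult_left_mono) auto
  also have "\<dots> = real m" using assms(1) a1 by (metis mult.right_neutral of_nat_mult)
  finally have "real m' * real \<pi> \<le> M * real \<pi>" using assms(11) by linarith
  moreover have "real \<pi> > 0" using assms(6) prime_gt_0_nat by simp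
  ultimately have "real m' \<le> M" by simp
  then show False using assms(12) by simp
qed

lemma decomp_unique:
  fixes m w m' w' \<pi> \<pi>' :: nat and M :: real
  assumes "m * w = m' * w'" "prime \<pi>" "prime \<pi>'" "\<pi> dvd m" "\<pi>' dvd m'"
    "\<forall>p. prime p \<and> p dvd m \<longrightarrow> \<pi> \<le> p" "\<forall>p. prime p \<and> p dvd m' \<longrightarrow> \<pi>' \<le> p"
    "\<forall>p. prime p \<and> p dvd w \<longrightarrow> p \<le> \<pi>" "\<forall>p. prime p \<and> p dvd w' \<longrightarrow> p \<le> \<pi>'"
    "real m \<le> M * real \<pi>" "real m' \<le> M * real \<pi>'" "real m > M" "real m' > M" "M \<ge> 0"
    "w > 0" "w' > 0"
  shows "\<pi> = \<pi>' \<and> m = m' \<and> w = w'"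
proof -
  have "\<not> \<pi> < \<pi>'" using du_lt[of m w m' w' \<pi> \<pi>' M] assms by blast
  moreover have "\<not> \<pi>' < \<pi>" using du_lt[of m' w' m w \<pi>' \<pi> M] assms by metis
  ultimately have pe: "\<pi> = \<pi>'" by simp
  have g0: "gcd w w' \<noteq> 0" using assms(15) by simp
  obtain a b where ab: "w = a * gcd w w'" "w' = b * gcd w w'" "coprime a b"
    using gcd_coprime_exists[OF g0] by blast
  have a0: "a > 0" using ab(1) assms(15) by (cases "a = 0") auto
  have b0: "b > 0" using ab(2) assms(16) by (cases "b = 0") auto
  have "m * a * gcd w w' = m' * b * gcd w w'" using assms(1) ab by (metis mult.assoc)
  then have mab: "m * a = m' * b" using g0 by (metis mult_right_cancel)
  have pa: "\<forall>p. prime p \<and> p dvd a \<longrightarrow> p \<le> \<pi>" using assms(8) ab(1) by (metis dvd_mult2)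
  have pb: "\<forall>p. prime p \<and> p dvd b \<longrightarrow> p \<le> \<pi>" using assms(9) ab(2) pe by (metis dvd_mult2)
  have b1: "b = 1"
    using du_aux[of m a m' b \<pi> M] mab ab(3) a0 b0 assms pe pa pb by blast
  have cab: "coprime b a" using ab(3) by (simp add: coprime_commute)
  have mab': "m' * b = m * a" using mab by simp
  have a1: "a = 1"
    using du_aux[of m' b m a \<pi> M] mab' cab a0 b0 assms pe pa pb by blast
  show ?thesis using a1 b1 ab mab pe by simp
qed



lemma norm_e [simp]: "norm (e z) = 1"
  unfolding e_def by (simp add: norm_exp_eq_Re)

lemma smooth_finite: "finite (smooth P R)"
proof -
  have "smooth P R \<subseteq> {..nat \<lfloor>P\<rfloor>}" unfolding smooth_def by (auto simp: le_nat_floor)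
  then show ?thesis using finite_subset by blast
qed

lemma Pr_finite: "finite {p::nat. prime p \<and> real p \<le> R}"
proof -
  have "{p::nat. prime p \<and> real p \<le> R} \<subseteq> {..nat \<lfloor>R\<rfloor>}" by (auto simp: le_nat_floor)
  then show ?thesis using finite_subset by blast
qed

lemma Bset_finite: "finite (Bset M \<pi> R)"
  unfolding Bset_def by (rule finite_subset[OF _ smooth_finite[of "M * real \<pi>" R]]) auto

lemma Cset_finite: "finite (Cset q P R)"
  unfolding Cset_def by (rule finite_subset[OF _ smooth_finite[of P R]]) auto

definition Quad :: "nat \<Rightarrow> real \<Rightarrow> real \<Rightarrow> real \<Rightarrow> (nat \<times> nat \<times> nat \<times> nat) set" where
  "Quad q P R M = (SIGMA \<pi>:{p::nat. prime p \<and> real p \<le> R}. SIGMA m:{m \<in> Bset M \<pi> R. coprime m q}.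
      SIGMA w:{w \<in> smooth (P / real m) (real \<pi>). coprime w q}. Cset q (P / (real m * real w)) R)"

definition Phi :: "nat \<times> nat \<times> nat \<times> nat \<Rightarrow> nat" where
  "Phi = (\<lambda>(\<pi>, m, w, u). m * w * u)"

lemma Quad_finite: "finite (Quad q P R M)"
  unfolding Quad_def
  by (intro finite_SigmaI Pr_finite Cset_finite finite_subset[OF _ Bset_finite] finite_subset[OF _ smooth_finite]) auto

lemma Quad_memD:
  assumes "(\<pi>, m, w, u) \<in> Quad q P R M"
  shows "prime \<pi>" "real \<pi> \<le> R" "1 \<le> m" "real m \<le> M * real \<pi>" "\<forall>p. prime p \<and> p dvd m \<longrightarrow> real p \<le> R"
    "real m > M" "\<pi> dvd m" "\<forall>p. prime p \<and> p dvd m \<longrightarrow> \<pi> \<le> p" "coprime m q"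
    "1 \<le> w" "real w \<le> P / real m" "\<forall>p. prime p \<and> p dvd w \<longrightarrow> p \<le> \<pi>" "coprime w q"
    "1 \<le> u" "real u \<le> P / (real m * real w)" "\<forall>p. prime p \<and> p dvd u \<longrightarrow> real p \<le> R" "dvd_inf u q"
  using assms unfolding Quad_def Bset_def smooth_def Cset_def by auto

lemma Phi_inj: "M \<ge> 0 \<Longrightarrow> inj_on Phi (Quad q P R M)"
proof (rule inj_onI)
  fix a b assume M0: "M \<ge> 0" and a: "a \<in> Quad q P R M" and b: "b \<in> Quad q P R M" and eq: "Phi a = Phi b"
  obtain \<pi> m w u where av: "a = (\<pi>, m, w, u)" by (cases a) auto
  obtain \<pi>' m' w' u' where bv: "b = (\<pi>', m', w', u')" by (cases b) auto
  note A = Quad_memD[OF a[unfolded av]]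
  note B = Quad_memD[OF b[unfolded bv]]
  have e1: "(m * w) * u = (m' * w') * u'" using eq av bv unfolding Phi_def by simp
  have c1: "coprime (m * w) q" using A by simp
  have c2: "coprime (m' * w') q" using B by simp
  have uu: "u = u'" using qsplit_unique[OF e1 c1 c2] A B by simp
  have e2: "m * w = m' * w'" using e1 uu A(14) by simp
  have "\<pi> = \<pi>' \<and> m = m' \<and> w = w'"
    by (rule decomp_unique[of m w m' w' \<pi> \<pi>' M]) (use A B e2 M0 in auto)
  then show "a = b" using av bv uu by simp
qed

lemma Phi_into: "Phi ` Quad q P R M \<subseteq> smooth P R"
proof
  fix x assume "x \<in> Phi ` Quad q P R M"
  then obtain \<pi> m w u where mem: "(\<pi>, m, w, u) \<in> Quad q P R M" and x: "x = m * w * u"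
    unfolding Phi_def by auto
  note A = Quad_memD[OF mem]
  have "real x = real m * real w * real u" using x by simp
  also have "\<dots> \<le> real m * real w * (P / (real m * real w))"
    using A by (intro mult_left_mono) auto
  also have "\<dots> = P" using A by simp
  finally have xP: "real x \<le> P" .
  have x1: "1 \<le> x" using A x by simp
  have "\<forall>p. prime p \<and> p dvd x \<longrightarrow> real p \<le> R"
  proof (intro allI impI)
    fix p assume p: "prime p \<and> p dvd x"
    then have "p dvd m \<or> p dvd w \<or> p dvd u" using x prime_dvd_mult_iff by metis
    then show "real p \<le> R"
    proof (elim disjE)
      assume "p dvd w" then have "p \<le> \<pi>" using A p by blast
      then show ?thesis using A(2) by linarith
    qed (use A p in blast)+
  qed
  then show "x \<in> smooth P R" unfolding smooth_def using xP x1 by auto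
qed

lemma complement_split:
  assumes M1: "M \<ge> 1" and q0: "q > 0" and x: "x \<in> smooth P R - Phi ` Quad q P R M"
  shows "\<exists>v u. x = v * u \<and> 1 \<le> v \<and> real v \<le> M \<and> u \<in> sF (prime_factors q) P"
proof -
  have xs: "x \<in> smooth P R" using x by auto
  then have x1: "1 \<le> x" and xP: "real x \<le> P" and xR: "\<forall>p. prime p \<and> p dvd x \<longrightarrow> real p \<le> R"
    unfolding smooth_def by auto
  obtain v u where vu: "x = v * u" "coprime v q" "dvd_inf u q" using qsplit_exists[of x q] x1 by auto
  have v1: "1 \<le> v" and u1: "1 \<le> u" using vu x1 by (cases "v = 0"; cases "u = 0"; auto)+
  have uP: "real u \<le> P"
  proof -
    have "u \<le> x" using vu v1 by simp
    then show ?thesis using xP by linarith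
  qed
  have uF: "u \<in> sF (prime_factors q) P"
    unfolding sF_def using u1 uP vu(3) q0 unfolding dvd_inf_def by (auto simp: in_prime_factors_iff)
  have "real v \<le> M"
  proof (rule ccontr)
    assume "\<not> real v \<le> M"
    then have "real v > M" by simp
    then obtain \<pi> m w where H: "prime \<pi>" "\<pi> dvd m" "\<forall>p. prime p \<and> p dvd m \<longrightarrow> \<pi> \<le> p"
      "\<forall>p. prime p \<and> p dvd w \<longrightarrow> p \<le> \<pi>" "real m > M" "real m \<le> M * real \<pi>" "v = m * w"
      using decomp_exists[OF M1] by blast
    have m1: "1 \<le> m" and w1: "1 \<le> w" using H(7) v1 by (cases "m = 0"; cases "w = 0"; auto)+
    have dx: "\<And>d. d dvd m \<or> d dvd w \<or> d dvd u \<Longrightarrow> d dvd x"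
      using vu(1) H(7) by (metis dvd_mult dvd_mult2 mult.commute)
    have "\<pi> dvd x" using dx H(2) by blast
    then have piR: "real \<pi> \<le> R" using xR H(1) by blast
    have cm: "coprime m q" and cw: "coprime w q" using vu(2) H(7) by auto
    have rmw: "real m * real w * real u \<le> P" using xP vu(1) H(7) by (metis of_nat_mult)
    have "(\<pi>, m, w, u) \<in> Quad q P R M"
      unfolding Quad_def Bset_def smooth_def Cset_def
    proof (intro SigmaI CollectI conjI)
      show "prime \<pi>" "real \<pi> \<le> R" by fact+
      show "1 \<le> m" "1 \<le> w" "1 \<le> u" by fact+
      show "real m \<le> M * real \<pi>" "M < real m" "\<pi> dvd m" "coprime m q" "coprime w q" "dvd_inf u q"
        using H cm cw vu by auto
      show "\<forall>p. prime p \<and> p dvd m \<longrightarrow> \<pi> \<le> p" using H by blast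
      show "\<forall>p. prime p \<and> p dvd w \<longrightarrow> real p \<le> real \<pi>" using H by auto
      show "\<forall>p. prime p \<and> p dvd m \<longrightarrow> real p \<le> R" using dx xR by blast
      show "\<forall>p. prime p \<and> p dvd u \<longrightarrow> real p \<le> R" using dx xR by blast
      have "real m * real w \<le> P"
        using rmw u1 by (smt (verit, ccfv_SIG) mult_le_cancel_left1 mult_nonneg_nonneg of_nat_0_le_iff of_nat_1 of_nat_mono)
      then show "real w \<le> P / real m" using m1 by (simp add: field_simps)
      show "real u \<le> P / (real m * real w)" using rmw m1 w1 by (simp add: field_simps)
    qed
    moreover have "Phi (\<pi>, m, w, u) = x" unfolding Phi_def using vu H by simp
    ultimately show False using x by blast
  qed
  then show ?thesis using vu v1 uF by blast
qed

lemma complement_card: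
  assumes M1: "M \<ge> 1" and q0: "q > 0"
  shows "real (card (smooth P R - Phi ` Quad q P R M)) \<le> M * real (card (sF (prime_factors q) P))"
proof -
  let ?S = "sF (prime_factors q) P"
  have "smooth P R - Phi ` Quad q P R M \<subseteq> (\<lambda>(v, u). v * u) ` ({1..nat \<lfloor>M\<rfloor>} \<times> ?S)"
  proof
    fix x assume "x \<in> smooth P R - Phi ` Quad q P R M"
    then obtain v u where "x = v * u" "1 \<le> v" "real v \<le> M" "u \<in> ?S"
      using complement_split[OF M1 q0] by blast
    then show "x \<in> (\<lambda>(v, u). v * u) ` ({1..nat \<lfloor>M\<rfloor>} \<times> ?S)"
      by (intro image_eqI[of _ _ "(v, u)"]) (auto simp: le_nat_floor)
  qed
  then have "card (smooth P R - Phi ` Quad q P R M) \<le> card ((\<lambda>(v, u). v * u) ` ({1..nat \<lfloor>M\<rfloor>} \<times> ?S))"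
    by (intro card_mono finite_imageI finite_SigmaI sF_finite) auto
  also have "\<dots> \<le> card ({1..nat \<lfloor>M\<rfloor>} \<times> ?S)" by (rule card_image_le) (auto intro: sF_finite)
  also have "\<dots> = nat \<lfloor>M\<rfloor> * card ?S" by (simp add: card_cartesian_product)
  finally have "real (card (smooth P R - Phi ` Quad q P R M)) \<le> real (nat \<lfloor>M\<rfloor>) * real (card ?S)"
    by (metis of_nat_le_iff of_nat_mult)
  also have "\<dots> \<le> M * real (card ?S)" using M1 by (intro mult_right_mono) auto
  finally show ?thesis .
qed

lemma pairs_card:
  assumes M0: "M \<ge> 0" and R0: "R \<ge> 0"
  shows "real (card (SIGMA \<pi>:{p::nat. prime p \<and> real p \<le> R}. {m \<in> Bset M \<pi> R. coprime m q})) \<le> M * R"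
proof -
  let ?Pa = "SIGMA \<pi>:{p::nat. prime p \<and> real p \<le> R}. {m \<in> Bset M \<pi> R. coprime m q}"
  have inj: "inj_on snd ?Pa"
  proof (rule inj_onI)
    fix a b assume a: "a \<in> ?Pa" and b: "b \<in> ?Pa" and eq: "snd a = snd b"
    obtain \<pi> m where av: "a = (\<pi>, m)" by (cases a)
    obtain \<pi>' m' where bv: "b = (\<pi>', m')" by (cases b)
    have mm: "m = m'" using eq av bv by simp
    have A: "prime \<pi>" "\<pi> dvd m" "\<forall>p. prime p \<and> p dvd m \<longrightarrow> \<pi> \<le> p"
      using a av unfolding Bset_def by auto
    have B: "prime \<pi>'" "\<pi>' dvd m" "\<forall>p. prime p \<and> p dvd m \<longrightarrow> \<pi>' \<le> p"
      using b bv mm unfolding Bset_def by auto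
    have "\<pi> \<le> \<pi>'" using A B by blast
    moreover have "\<pi>' \<le> \<pi>" using A B by blast
    ultimately show "a = b" using av bv mm by simp
  qed
  have sub: "snd ` ?Pa \<subseteq> {1..nat \<lfloor>M * R\<rfloor>}"
  proof
    fix m assume "m \<in> snd ` ?Pa"
    then obtain \<pi> where p: "prime \<pi>" "real \<pi> \<le> R" "m \<in> Bset M \<pi> R" by auto
    then have "1 \<le> m" "real m \<le> M * real \<pi>" unfolding Bset_def smooth_def by auto
    moreover have "M * real \<pi> \<le> M * R" using p M0 by (intro mult_left_mono) auto
    ultimately show "m \<in> {1..nat \<lfloor>M * R\<rfloor>}" by (auto simp: le_nat_floor)
  qed
  have "card ?Pa = card (snd ` ?Pa)" using inj by (simp add: card_image)
  also have "\<dots> \<le> nat \<lfloor>M * R\<rfloor>" using card_mono[OF _ sub] by simp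
  finally have "real (card ?Pa) \<le> real (nat \<lfloor>M * R\<rfloor>)" by simp
  also have "\<dots> \<le> M * R" using M0 R0 by simp
  finally show ?thesis .
qed



lemma sum_Sigma4:
  assumes "finite A" "\<And>a. a \<in> A \<Longrightarrow> finite (B a)" "\<And>a b. finite (C a b)" "\<And>a b c. finite (D a b c)"
  shows "(\<Sum>z\<in>(SIGMA a:A. SIGMA b:B a. SIGMA c:C a b. D a b c). f z)
    = (\<Sum>a\<in>A. \<Sum>b\<in>B a. \<Sum>c\<in>C a b. \<Sum>d\<in>D a b c. f (a, b, c, d))"
proof -
  have 1: "(\<Sum>c\<in>C a b. \<Sum>d\<in>D a b c. f (a, b, c, d)) = (\<Sum>z\<in>(SIGMA c:C a b. D a b c). f (a, b, z))" for a b
    using sum.Sigma[of "C a b" "D a b" "\<lambda>c d. f (a, b, c, d)"] assms(3,4) by (simp add: split_def)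
  have 2: "(\<Sum>b\<in>B a. \<Sum>z\<in>(SIGMA c:C a b. D a b c). f (a, b, z)) = (\<Sum>z\<in>(SIGMA b:B a. SIGMA c:C a b. D a b c). f (a, z))"
    if "a \<in> A" for a
    using sum.Sigma[of "B a" "\<lambda>b. SIGMA c:C a b. D a b c" "\<lambda>b z. f (a, b, z)"] assms that
    by (simp add: split_def)
  have 3: "(\<Sum>a\<in>A. \<Sum>z\<in>(SIGMA b:B a. SIGMA c:C a b. D a b c). f (a, z)) = (\<Sum>z\<in>(SIGMA a:A. SIGMA b:B a. SIGMA c:C a b. D a b c). f z)"
    using sum.Sigma[of A "\<lambda>a. SIGMA b:B a. SIGMA c:C a b. D a b c" "\<lambda>a z. f (a, z)"] assms
    by (simp add: split_def)
  show ?thesis using 1 2 3 by simp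
qed

lemma fsum_identity:
  assumes M0: "M \<ge> 0"
  shows "fsum k \<alpha> P R = (\<Sum>x\<in>smooth P R - Phi ` Quad q P R M. e (\<alpha> * real x ^ k))
     + (\<Sum>\<pi>\<in>{p::nat. prime p \<and> real p \<le> R}. \<Sum>m\<in>{m \<in> Bset M \<pi> R. coprime m q}.
          gstar k q \<pi> (\<alpha> * real m ^ k) P m R)"
proof -
  let ?h = "\<lambda>x::nat. e (\<alpha> * real x ^ k)"
  have "fsum k \<alpha> P R = (\<Sum>x\<in>smooth P R - Phi ` Quad q P R M. ?h x) + (\<Sum>x\<in>Phi ` Quad q P R M. ?h x)"
    unfolding fsum_def by (rule sum.subset_diff[OF Phi_into smooth_finite])
  moreover have "(\<Sum>x\<in>Phi ` Quad q P R M. ?h x) = (\<Sum>z\<in>Quad q P R M. ?h (Phi z))"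
    using sum.reindex[OF Phi_inj[OF M0]] by simp
  moreover have "(\<Sum>z\<in>Quad q P R M. ?h (Phi z)) = (\<Sum>\<pi>\<in>{p::nat. prime p \<and> real p \<le> R}. \<Sum>m\<in>{m \<in> Bset M \<pi> R. coprime m q}.
          \<Sum>w\<in>{w \<in> smooth (P / real m) (real \<pi>). coprime w q}. \<Sum>u\<in>Cset q (P / (real m * real w)) R. ?h (m * w * u))"
    unfolding Quad_def Phi_def
    by (subst sum_Sigma4) (auto intro: Pr_finite Bset_finite Cset_finite smooth_finite finite_subset[OF _ Bset_finite] finite_subset[OF _ smooth_finite])
  moreover have "\<And>\<pi> m. gstar k q \<pi> (\<alpha> * real m ^ k) P m R = (\<Sum>w\<in>{w \<in> smooth (P / real m) (real \<pi>). coprime w q}.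
      \<Sum>u\<in>Cset q (P / (real m * real w)) R. ?h (m * w * u))"
    unfolding gstar_def by (simp add: power_mult_distrib mult_ac)
  ultimately show ?thesis by simp
qed

lemma two_power:
  fixes a b s :: real assumes "a \<ge> 0" "b \<ge> 0" "s \<ge> 1"
  shows "(a + b) powr s \<le> 2 powr (s - 1) * (a powr s + b powr s)"
proof -
  have "(\<Sum>i\<in>(UNIV::bool set). if i then a else b) powr s
     \<le> real (card (UNIV::bool set)) powr (s - 1) * (\<Sum>i\<in>(UNIV::bool set). (if i then a else b) powr s)"
    by (rule power_mean_sum) (use assms in auto)
  then show ?thesis by (simp add: UNIV_bool add.commute)
qed

lemma pointwise:
  assumes M1: "M \<ge> 1" and R0: "R \<ge> 0" and q0: "q > 0" and s1: "s \<ge> 1"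
  shows "cmod (fsum k \<alpha> P R) powr s \<le> 2 powr (s - 1) * ((M * real (card (sF (prime_factors q) P))) powr s
     + (M * R) powr (s - 1) * (\<Sum>\<pi>\<in>{p::nat. prime p \<and> real p \<le> R}. \<Sum>m\<in>{m \<in> Bset M \<pi> R. coprime m q}.
          cmod (gstar k q \<pi> (\<alpha> * real m ^ k) P m R) powr s))"
proof -
  let ?Pr = "{p::nat. prime p \<and> real p \<le> R}"
  let ?Bm = "\<lambda>\<pi>. {m \<in> Bset M \<pi> R. coprime m q}"
  let ?Pa = "SIGMA \<pi>:?Pr. ?Bm \<pi>"
  let ?g = "\<lambda>z. cmod (gstar k q (fst z) (\<alpha> * real (snd z) ^ k) P (snd z) R)"
  let ?T1 = "\<Sum>x\<in>smooth P R - Phi ` Quad q P R M. e (\<alpha> * real x ^ k)"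
  let ?T2 = "\<Sum>\<pi>\<in>?Pr. \<Sum>m\<in>?Bm \<pi>. gstar k q \<pi> (\<alpha> * real m ^ k) P m R"
  let ?A1 = "M * real (card (sF (prime_factors q) P))"
  have M0: "M \<ge> 0" using M1 by simp
  have fPa: "finite ?Pa" by (intro finite_SigmaI Pr_finite finite_subset[OF _ Bset_finite]) auto
  have sig: "(\<Sum>\<pi>\<in>?Pr. \<Sum>m\<in>?Bm \<pi>. f \<pi> m) = (\<Sum>z\<in>?Pa. f (fst z) (snd z))" for f :: "nat \<Rightarrow> nat \<Rightarrow> real"
  proof -
    have "\<forall>x\<in>?Pr. finite (?Bm x)" by (auto intro: finite_subset[OF _ Bset_finite])
    then show ?thesis using sum.Sigma[of ?Pr ?Bm f] Pr_finite by (simp add: split_def)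
  qed
  have n1: "cmod ?T1 \<le> ?A1"
  proof -
    have "cmod ?T1 \<le> (\<Sum>x\<in>smooth P R - Phi ` Quad q P R M. cmod (e (\<alpha> * real x ^ k)))" by (rule norm_sum)
    also have "\<dots> = real (card (smooth P R - Phi ` Quad q P R M))" by simp
    also have "\<dots> \<le> ?A1" by (rule complement_card[OF M1 q0])
    finally show ?thesis .
  qed
  have n2: "cmod ?T2 \<le> (\<Sum>z\<in>?Pa. ?g z)"
  proof -
    have "cmod ?T2 \<le> (\<Sum>\<pi>\<in>?Pr. cmod (\<Sum>m\<in>?Bm \<pi>. gstar k q \<pi> (\<alpha> * real m ^ k) P m R))" by (rule norm_sum)
    also have "\<dots> \<le> (\<Sum>\<pi>\<in>?Pr. \<Sum>m\<in>?Bm \<pi>. cmod (gstar k q \<pi> (\<alpha> * real m ^ k) P m R))"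
      by (intro sum_mono norm_sum)
    also have "\<dots> = (\<Sum>z\<in>?Pa. ?g z)" by (rule sig)
    finally show ?thesis .
  qed
  have "cmod (fsum k \<alpha> P R) = cmod (?T1 + ?T2)" using fsum_identity[OF M0] by metis
  also have "\<dots> \<le> cmod ?T1 + cmod ?T2" by (rule norm_triangle_ineq)
  also have "\<dots> \<le> ?A1 + (\<Sum>z\<in>?Pa. ?g z)" using n1 n2 by simp
  finally have nf: "cmod (fsum k \<alpha> P R) \<le> ?A1 + (\<Sum>z\<in>?Pa. ?g z)" .
  have A10: "?A1 \<ge> 0" using M0 by simp
  have A20: "(\<Sum>z\<in>?Pa. ?g z) \<ge> 0" by (intro sum_nonneg) auto
  have "cmod (fsum k \<alpha> P R) powr s \<le> (?A1 + (\<Sum>z\<in>?Pa. ?g z)) powr s"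
    using nf s1 by (intro powr_mono2) auto
  also have "\<dots> \<le> 2 powr (s - 1) * (?A1 powr s + (\<Sum>z\<in>?Pa. ?g z) powr s)"
    by (rule two_power[OF A10 A20 s1])
  also have "(\<Sum>z\<in>?Pa. ?g z) powr s \<le> real (card ?Pa) powr (s - 1) * (\<Sum>z\<in>?Pa. ?g z powr s)"
    by (rule power_mean_sum[OF fPa _ s1]) auto
  also have "\<dots> \<le> (M * R) powr (s - 1) * (\<Sum>z\<in>?Pa. ?g z powr s)"
    using pairs_card[OF M0 R0, of q] s1 by (intro mult_right_mono powr_mono2 sum_nonneg) auto
  also have "(\<Sum>z\<in>?Pa. ?g z powr s) = (\<Sum>\<pi>\<in>?Pr. \<Sum>m\<in>?Bm \<pi>. cmod (gstar k q \<pi> (\<alpha> * real m ^ k) P m R) powr s)"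
    by (rule sig[symmetric])
  finally show ?thesis by simp
qed



lemma Marc_sub_U:
  "Marc k q Q P \<subseteq> (\<Union>a\<in>{..q}. {(real a - Q * P powr (- real k)) / real q .. (real a + Q * P powr (- real k)) / real q})"
  if "q > 0"
proof
  fix \<alpha> assume "\<alpha> \<in> Marc k q Q P"
  then obtain a where a: "a \<le> q" "\<bar>real q * \<alpha> - real a\<bar> \<le> Q * P powr (- real k)"
    unfolding Marc_def by (auto split: if_splits)
  have "\<alpha> \<in> {(real a - Q * P powr (- real k)) / real q .. (real a + Q * P powr (- real k)) / real q}"
    using a that by (auto simp: field_simps abs_le_iff)
  then show "\<alpha> \<in> (\<Union>a\<in>{..q}. {(real a - Q * P powr (- real k)) / real q .. (real a + Q * P powr (- real k)) / real q})"
    using a by blast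
qed

lemma Marc_sets: "Marc k q Q P \<in> sets lborel"
proof -
  have "Marc k q Q P = (if real q \<le> Q then {0..<1} \<inter> (\<Union>a\<in>{a. a \<le> q \<and> coprime a q}. {\<alpha>. \<bar>real q * \<alpha> - real a\<bar> \<le> Q * P powr (- real k)}) else {})"
    unfolding Marc_def by auto
  moreover have "closed {\<alpha>::real. \<bar>real q * \<alpha> - real a\<bar> \<le> Q * P powr (- real k)}" for a
    by (intro closed_Collect_le continuous_intros)
  ultimately show ?thesis by (auto intro!: sets.Int sets.finite_UN borel_closed)
qed

lemma Narc_sets: "Narc k q Q P \<in> sets lborel"
  unfolding Narc_def by (intro sets.Diff Marc_sets)

lemma Marc_sub01: "Marc k q Q P \<subseteq> {0..1}"
  unfolding Marc_def by auto

lemma Narc_sub: "Narc k q Q P \<subseteq> Marc k q Q P"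
  unfolding Narc_def by auto

lemma Marc_measure:
  assumes q1: "q \<ge> 1" and c0: "Q * P powr (- real k) \<ge> 0"
  shows "measure lborel (Marc k q Q P) \<le> 4 * (Q * P powr (- real k))"
proof -
  define c where "c = Q * P powr (- real k)"
  let ?I = "\<lambda>a::nat. {(real a - c) / real q .. (real a + c) / real q}"
  have sub: "Marc k q Q P \<subseteq> (\<Union>a\<in>{..q}. ?I a)" using Marc_sub_U[of q k Q P] q1 unfolding c_def by simp
  have fm: "(\<Union>a\<in>{..q}. ?I a) \<in> fmeasurable lborel"
    by (intro fmeasurable_compact compact_UN) auto
  have "measure lborel (Marc k q Q P) \<le> measure lborel (\<Union>a\<in>{..q}. ?I a)"
    by (rule measure_mono_fmeasurable[OF sub Marc_sets fm])
  also have "\<dots> \<le> (\<Sum>a\<in>{..q}. measure lborel (?I a))" by (rule measure_UNION_le) auto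
  also have "\<dots> = (\<Sum>a\<in>{..q}. 2 * c / real q)"
  proof (intro sum.cong refl)
    fix a
    have "(real a - c) / real q \<le> (real a + c) / real q" using c0 q1 unfolding c_def by (intro divide_right_mono) auto
    then have "measure lborel (?I a) = (real a + c) / real q - (real a - c) / real q" by simp
    also have "\<dots> = 2 * c / real q" by (simp add: diff_divide_distrib[symmetric])
    finally show "measure lborel (?I a) = 2 * c / real q" .
  qed
  also have "\<dots> = (real q + 1) * (2 * c / real q)" by simp
  also have "\<dots> \<le> 4 * c"
  proof -
    have "(real q + 1) * (2 * c / real q) = 2 * c + 2 * c / real q" using q1 by (simp add: field_simps)
    also have "2 * c / real q \<le> 2 * c" using q1 c0 unfolding c_def by (simp add: divide_le_eq mult_le_cancel_left1 mult_mono)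
    finally show ?thesis by simp
  qed
  finally show ?thesis unfolding c_def .
qed

lemma cont_int:
  fixes F :: "real \<Rightarrow> complex"
  assumes "continuous_on UNIV F" "s > 0" "A \<in> sets lborel" "A \<subseteq> {0..1}"
  shows "set_integrable lborel A (\<lambda>\<alpha>. cmod (F \<alpha>) powr s)"
proof -
  have "continuous_on {0..1} (\<lambda>\<alpha>. cmod (F \<alpha>) powr s)"
    using assms(2) by (intro continuous_on_powr' continuous_intros continuous_on_subset[OF assms(1)]) auto
  then have "set_integrable lborel {0..1} (\<lambda>\<alpha>. cmod (F \<alpha>) powr s)"
    by (rule borel_integrable_atLeastAtMost')
  then show ?thesis using assms(3,4) by (rule set_integrable_subset)
qed

lemma fsum_cont: "continuous_on UNIV (\<lambda>\<alpha>. fsum k \<alpha> P R)"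
  unfolding fsum_def e_def by (intro continuous_intros)

lemma gstar_cont: "continuous_on UNIV (\<lambda>\<alpha>. gstar k q \<pi> (\<alpha> * real m ^ k) P m R)"
  unfolding gstar_def e_def by (intro continuous_intros)

lemma emeasure_fin: assumes "A \<in> sets lborel" "A \<subseteq> {0..(1::real)}" shows "emeasure lborel A < \<infinity>"
proof -
  from assms(2) have "emeasure lborel A \<le> emeasure lborel {0..(1::real)}" by (intro emeasure_mono) auto
  also have "\<dots> < \<infinity>" by simp
  finally show ?thesis .
qed

lemma arc_bound:
  assumes As: "A \<in> sets lborel" and Asub: "A \<subseteq> Marc k q Q P"
    and M1: "M \<ge> 1" and R0: "R \<ge> 0" and q1: "q \<ge> 1" and s1: "s \<ge> 1"
    and c0: "Q * P powr (- real k) \<ge> 0"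
  shows "(LINT \<alpha>:A|lborel. cmod (fsum k \<alpha> P R) powr s)
    \<le> 2 powr (s - 1) * ((M * real (card (sF (prime_factors q) P))) powr s * (4 * (Q * P powr (- real k)))
       + (M * R) powr (s - 1) * (\<Sum>\<pi>\<in>{p::nat. prime p \<and> real p \<le> R}. \<Sum>m\<in>{m \<in> Bset M \<pi> R. coprime m q}.
          (LINT \<alpha>:A|lborel. cmod (gstar k q \<pi> (\<alpha> * real m ^ k) P m R) powr s)))"
proof -
  let ?Pr = "{p::nat. prime p \<and> real p \<le> R}"
  let ?Bm = "\<lambda>\<pi>. {m \<in> Bset M \<pi> R. coprime m q}"
  let ?h = "\<lambda>\<pi> m \<alpha>. cmod (gstar k q \<pi> (\<alpha> * real m ^ k) P m R) powr s"
  let ?K = "2 powr (s - 1)" and ?a = "(M * real (card (sF (prime_factors q) P))) powr s" and ?b = "(M * R) powr (s - 1)"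
  let ?G = "\<lambda>\<alpha>. ?K * (?a + ?b * (\<Sum>\<pi>\<in>?Pr. \<Sum>m\<in>?Bm \<pi>. ?h \<pi> m \<alpha>))"
  have A01: "A \<subseteq> {0..1}" using Asub Marc_sub01 by blast
  have s0: "s > 0" using s1 by simp
  have fin: "emeasure lborel A < \<infinity>" using emeasure_fin[OF As A01] .
  have ih: "integrable lborel (\<lambda>\<alpha>. indicator A \<alpha> *\<^sub>R ?h \<pi> m \<alpha>)" for \<pi> m
    using cont_int[OF gstar_cont s0 As A01] unfolding set_integrable_def .
  have iF: "integrable lborel (\<lambda>\<alpha>. indicator A \<alpha> *\<^sub>R (cmod (fsum k \<alpha> P R) powr s))"
    using cont_int[OF fsum_cont s0 As A01] unfolding set_integrable_def .
  have iI: "integrable lborel (\<lambda>\<alpha>. indicator A \<alpha> *\<^sub>R (1::real))" using As fin by (rule integrable_indicator)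
  have Geq: "indicator A \<alpha> *\<^sub>R ?G \<alpha> = ?K * (?a * (indicator A \<alpha> *\<^sub>R (1::real))
      + ?b * (\<Sum>\<pi>\<in>?Pr. \<Sum>m\<in>?Bm \<pi>. indicator A \<alpha> *\<^sub>R ?h \<pi> m \<alpha>))" for \<alpha>
    by (simp add: sum_distrib_left algebra_simps)
  have iS: "integrable lborel (\<lambda>\<alpha>. \<Sum>\<pi>\<in>?Pr. \<Sum>m\<in>?Bm \<pi>. indicator A \<alpha> *\<^sub>R ?h \<pi> m \<alpha>)"
    by (intro Bochner_Integration.integrable_sum ih)
  have i1: "integrable lborel (\<lambda>\<alpha>. ?a * (indicator A \<alpha> *\<^sub>R (1::real)))"
    by (rule integrable_mult_right) (rule iI)
  have i2: "integrable lborel (\<lambda>\<alpha>. ?b * (\<Sum>\<pi>\<in>?Pr. \<Sum>m\<in>?Bm \<pi>. indicator A \<alpha> *\<^sub>R ?h \<pi> m \<alpha>))"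
    by (rule integrable_mult_right) (rule iS)
  have i12: "integrable lborel (\<lambda>\<alpha>. ?a * (indicator A \<alpha> *\<^sub>R (1::real)) + ?b * (\<Sum>\<pi>\<in>?Pr. \<Sum>m\<in>?Bm \<pi>. indicator A \<alpha> *\<^sub>R ?h \<pi> m \<alpha>))"
    using i1 i2 by (rule Bochner_Integration.integrable_add)
  have iG: "integrable lborel (\<lambda>\<alpha>. indicator A \<alpha> *\<^sub>R ?G \<alpha>)"
    unfolding Geq by (rule integrable_mult_right) (rule i12)
  have "(LINT \<alpha>:A|lborel. cmod (fsum k \<alpha> P R) powr s) = integral\<^sup>L lborel (\<lambda>\<alpha>. indicator A \<alpha> *\<^sub>R (cmod (fsum k \<alpha> P R) powr s))"
    by (simp add: set_lebesgue_integral_def)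
  also have "\<dots> \<le> integral\<^sup>L lborel (\<lambda>\<alpha>. indicator A \<alpha> *\<^sub>R ?G \<alpha>)"
  proof (rule integral_mono[OF iF iG])
    fix \<alpha> :: real
    have "cmod (fsum k \<alpha> P R) powr s \<le> ?G \<alpha>" by (rule pointwise[OF M1 R0 _ s1]) (use q1 in simp)
    then show "indicator A \<alpha> *\<^sub>R (cmod (fsum k \<alpha> P R) powr s) \<le> indicator A \<alpha> *\<^sub>R ?G \<alpha>"
      by (simp add: indicator_def)
  qed
  also have "\<dots> = ?K * (?a * measure lborel A + ?b * (\<Sum>\<pi>\<in>?Pr. \<Sum>m\<in>?Bm \<pi>. (LINT \<alpha>:A|lborel. ?h \<pi> m \<alpha>)))"
  proof -
    have e1: "integral\<^sup>L lborel (\<lambda>\<alpha>. indicator A \<alpha> *\<^sub>R ?G \<alpha>)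
       = ?K * (integral\<^sup>L lborel (\<lambda>\<alpha>. ?a * (indicator A \<alpha> *\<^sub>R (1::real))) + integral\<^sup>L lborel (\<lambda>\<alpha>. ?b * (\<Sum>\<pi>\<in>?Pr. \<Sum>m\<in>?Bm \<pi>. indicator A \<alpha> *\<^sub>R ?h \<pi> m \<alpha>)))"
      unfolding Geq integral_mult_right_zero Bochner_Integration.integral_add[OF i1 i2] ..
    have e2: "integral\<^sup>L lborel (\<lambda>\<alpha>. \<Sum>\<pi>\<in>?Pr. \<Sum>m\<in>?Bm \<pi>. indicator A \<alpha> *\<^sub>R ?h \<pi> m \<alpha>)
       = (\<Sum>\<pi>\<in>?Pr. \<Sum>m\<in>?Bm \<pi>. integral\<^sup>L lborel (\<lambda>\<alpha>. indicator A \<alpha> *\<^sub>R ?h \<pi> m \<alpha>))"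
    proof -
      have "integral\<^sup>L lborel (\<lambda>\<alpha>. \<Sum>\<pi>\<in>?Pr. \<Sum>m\<in>?Bm \<pi>. indicator A \<alpha> *\<^sub>R ?h \<pi> m \<alpha>)
          = (\<Sum>\<pi>\<in>?Pr. integral\<^sup>L lborel (\<lambda>\<alpha>. \<Sum>m\<in>?Bm \<pi>. indicator A \<alpha> *\<^sub>R ?h \<pi> m \<alpha>))"
        by (rule Bochner_Integration.integral_sum[where I="?Pr" and M=lborel and f="\<lambda>\<pi> \<alpha>. \<Sum>m\<in>?Bm \<pi>. indicator A \<alpha> *\<^sub>R ?h \<pi> m \<alpha>"]) (intro Bochner_Integration.integrable_sum ih)
      also have "\<dots> = (\<Sum>\<pi>\<in>?Pr. \<Sum>m\<in>?Bm \<pi>. integral\<^sup>L lborel (\<lambda>\<alpha>. indicator A \<alpha> *\<^sub>R ?h \<pi> m \<alpha>))"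
      proof (intro sum.cong refl)
        fix \<pi> show "integral\<^sup>L lborel (\<lambda>\<alpha>. \<Sum>m\<in>?Bm \<pi>. indicator A \<alpha> *\<^sub>R ?h \<pi> m \<alpha>) = (\<Sum>m\<in>?Bm \<pi>. integral\<^sup>L lborel (\<lambda>\<alpha>. indicator A \<alpha> *\<^sub>R ?h \<pi> m \<alpha>))"
          by (rule Bochner_Integration.integral_sum[where I="?Bm \<pi>" and M=lborel and f="\<lambda>m \<alpha>. indicator A \<alpha> *\<^sub>R ?h \<pi> m \<alpha>"]) (rule ih)
      qed
      finally show ?thesis .
    qed
    have e3: "integral\<^sup>L lborel (\<lambda>\<alpha>. indicator A \<alpha> *\<^sub>R (1::real)) = measure lborel A" by simp
    show ?thesis unfolding e1 integral_mult_right_zero e2 e3 by (simp add: set_lebesgue_integral_def)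
  qed
  also have "\<dots> \<le> ?K * (?a * (4 * (Q * P powr (- real k))) + ?b * (\<Sum>\<pi>\<in>?Pr. \<Sum>m\<in>?Bm \<pi>. (LINT \<alpha>:A|lborel. ?h \<pi> m \<alpha>)))"
  proof -
    have "measure lborel A \<le> measure lborel (Marc k q Q P)"
      by (rule measure_mono_fmeasurable[OF Asub As]) (intro fmeasurableI Marc_sets emeasure_fin Marc_sub01)
    also have "\<dots> \<le> 4 * (Q * P powr (- real k))" by (rule Marc_measure[OF q1 c0])
    finally have "measure lborel A \<le> 4 * (Q * P powr (- real k))" .
    then show ?thesis by (intro mult_left_mono add_right_mono) auto
  qed
  finally show ?thesis .
qed



lemma Iq_nonneg: "Iq k s Arc q Q P R M \<ge> 0"
  unfolding Iq_def set_lebesgue_integral_def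
  by (intro sum_nonneg Bochner_Integration.integral_nonneg) (auto simp: indicator_def)

lemma count_bound:
  assumes d0: "\<delta> > 0" and q1: "q \<ge> 1" and P1: "P \<ge> 1" and qP: "real q \<le> P powr (real k / 2)"
  shows "real (card (sF (prime_factors q) P)) \<le> (1 / (1 - 2 powr (-\<delta>))) ^ nat \<lceil>2 powr (1/\<delta>)\<rceil> * P powr (\<delta> * (1 + real k))"
proof -
  define K0 where "K0 = (1 / (1 - 2 powr (-\<delta>))) ^ nat \<lceil>2 powr (1/\<delta>)\<rceil>"
  have K00: "K0 \<ge> 0" unfolding K0_def using d0 by (simp add: powr_less_one less_imp_le)
  have "real (card (sF (prime_factors q) P)) \<le> (\<Prod>p\<in>prime_factors q. 1 / (1 - real p powr (-\<delta>))) * P powr \<delta>"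
    by (rule rankin) (use d0 P1 in auto)
  also have "\<dots> \<le> (K0 * real q powr \<delta>) * P powr \<delta>"
    unfolding K0_def by (intro mult_right_mono prod_factor_bound) (use d0 q1 in auto)
  also have "\<dots> \<le> (K0 * (P powr (real k / 2)) powr \<delta>) * P powr \<delta>"
    using qP d0 K00 by (intro mult_right_mono mult_left_mono powr_mono2) auto
  also have "\<dots> = K0 * P powr (\<delta> * (1 + real k / 2))"
    using P1 by (simp add: powr_powr powr_add[symmetric] algebra_simps)
  also have "\<dots> \<le> K0 * P powr (\<delta> * (1 + real k))"
    using P1 d0 K00 by (intro mult_left_mono powr_mono) auto
  finally show ?thesis unfolding K0_def .
qed

theorem lemma3p4:
  fixes k :: nat and s :: real
  assumes "k \<ge> 1" and "s > 1"
  shows "\<forall>\<epsilon>>0. \<exists>\<eta>>0. \<exists>C>0. \<exists>P0. \<forall>P\<ge>P0. \<forall>R Q M :: real. \<forall>q :: nat.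
     2 \<le> R \<and> R \<le> P powr \<eta> \<and> 1 \<le> Q \<and> Q \<le> P powr (real k / 2) \<and> M \<ge> R
     \<and> 1 \<le> q \<and> real q \<le> Q \<longrightarrow>
       (LINT \<alpha>:Narc k q Q P|lborel. cmod (fsum k \<alpha> P R) powr s)
         \<le> C * ((M * R) powr (s - 1) * Iq k s Narc q Q P R M
                + Q * M powr s * P powr (\<epsilon> - real k))
     \<and> (LINT \<alpha>:Marc k q Q P|lborel. cmod (fsum k \<alpha> P R) powr s)
         \<le> C * ((M * R) powr (s - 1) * Iq k s Marc q Q P R M
                + Q * M powr s * P powr (\<epsilon> - real k))"
proof (intro allI impI)
  fix \<epsilon> :: real assume e0: "\<epsilon> > 0"
  have s1: "s \<ge> 1" using assms(2) by simp
  define \<delta> where "\<delta> = \<epsilon> / (2 * s * (1 + real k))"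
  have d0: "\<delta> > 0" unfolding \<delta>_def using e0 assms(2) by (simp add: field_simps add_pos_nonneg)
  have pos: "s * (1 + real k) > 0" using assms(2) by (simp add: add_pos_nonneg)
  have "\<delta> * (1 + real k) * s = \<epsilon> * (s * (1 + real k)) / (2 * (s * (1 + real k)))"
    unfolding \<delta>_def by (simp add: mult_ac)
  also have "\<dots> = \<epsilon> / 2"
  proof -
    have gen: "\<And>X::real. X \<noteq> 0 \<Longrightarrow> \<epsilon> * X / (2 * X) = \<epsilon> / 2" by simp
    show ?thesis using gen[of "s * (1 + real k)"] pos by linarith
  qed
  finally have dk: "\<delta> * (1 + real k) * s = \<epsilon> / 2" .
  define K0 where "K0 = (1 / (1 - 2 powr (-\<delta>))) ^ nat \<lceil>2 powr (1/\<delta>)\<rceil>"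
  have K00: "K0 \<ge> 0" unfolding K0_def using d0 by (simp add: powr_less_one less_imp_le)
  define C where "C = 2 powr (s - 1) * (1 + 4 * K0 powr s)"
  have C0: "C > 0" unfolding C_def by (simp add: add_pos_nonneg)
  show "\<exists>\<eta>>0. \<exists>C>0. \<exists>P0. \<forall>P\<ge>P0. \<forall>R Q M :: real. \<forall>q :: nat.
     2 \<le> R \<and> R \<le> P powr \<eta> \<and> 1 \<le> Q \<and> Q \<le> P powr (real k / 2) \<and> M \<ge> R
     \<and> 1 \<le> q \<and> real q \<le> Q \<longrightarrow>
       (LINT \<alpha>:Narc k q Q P|lborel. cmod (fsum k \<alpha> P R) powr s)
         \<le> C * ((M * R) powr (s - 1) * Iq k s Narc q Q P R M
                + Q * M powr s * P powr (\<epsilon> - real k))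
     \<and> (LINT \<alpha>:Marc k q Q P|lborel. cmod (fsum k \<alpha> P R) powr s)
         \<le> C * ((M * R) powr (s - 1) * Iq k s Marc q Q P R M
                + Q * M powr s * P powr (\<epsilon> - real k))"
  proof (rule exI[of _ 1], rule conjI[OF zero_less_one], rule exI[of _ C], rule conjI[OF C0], rule exI[of _ 1], intro allI impI)
    fix P R Q M :: real and q :: nat
    assume P1: "1 \<le> P" and H: "2 \<le> R \<and> R \<le> P powr 1 \<and> 1 \<le> Q \<and> Q \<le> P powr (real k / 2) \<and> M \<ge> R \<and> 1 \<le> q \<and> real q \<le> Q"
    have R0: "R \<ge> 0" and M1: "M \<ge> 1" and q1: "q \<ge> 1" and Q1: "Q \<ge> 1" using H by auto
    have qP: "real q \<le> P powr (real k / 2)" using H by linarith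
    have c0: "Q * P powr (- real k) \<ge> 0" using Q1 by simp
    define cd where "cd = real (card (sF (prime_factors q) P))"
    have cd0: "cd \<ge> 0" unfolding cd_def by simp
    have cb: "cd \<le> K0 * P powr (\<delta> * (1 + real k))"
      unfolding cd_def K0_def by (rule count_bound[OF d0 q1 P1 qP])
    have X0: "Q * M powr s * P powr (\<epsilon> - real k) \<ge> 0" using Q1 by simp
    have key: "(M * cd) powr s * (4 * (Q * P powr (- real k))) \<le> 4 * K0 powr s * (Q * M powr s * P powr (\<epsilon> - real k))"
    proof -
      have "cd powr s \<le> (K0 * P powr (\<delta> * (1 + real k))) powr s"
        using cb cd0 s1 by (intro powr_mono2) auto
      also have "\<dots> = K0 powr s * P powr (\<delta> * (1 + real k) * s)"
        using K00 P1 by (simp add: powr_mult powr_powr)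
      also have "\<dots> = K0 powr s * P powr (\<epsilon> / 2)" by (simp only: dk)
      finally have cs: "cd powr s \<le> K0 powr s * P powr (\<epsilon> / 2)" .
      have "cd powr s * P powr (- real k) \<le> K0 powr s * P powr (\<epsilon> / 2) * P powr (- real k)"
        using cs by (intro mult_right_mono) auto
      also have "\<dots> = K0 powr s * P powr (\<epsilon> / 2 - real k)"
        using P1 by (simp add: powr_add[symmetric])
      also have "\<dots> \<le> K0 powr s * P powr (\<epsilon> - real k)"
        using P1 e0 by (intro mult_left_mono powr_mono) auto
      finally have inner: "cd powr s * P powr (- real k) \<le> K0 powr s * P powr (\<epsilon> - real k)" .
      have "(M * cd) powr s * (4 * (Q * P powr (- real k))) = (4 * Q * M powr s) * (cd powr s * P powr (- real k))"
        using M1 cd0 by (simp add: powr_mult algebra_simps)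
      also have "\<dots> \<le> (4 * Q * M powr s) * (K0 powr s * P powr (\<epsilon> - real k))"
        using inner Q1 by (intro mult_left_mono) auto
      finally show ?thesis by (simp add: algebra_simps)
    qed
    have fin: "(LINT \<alpha>:A|lborel. cmod (fsum k \<alpha> P R) powr s)
         \<le> C * ((M * R) powr (s - 1) * Iq k s Arc q Q P R M + Q * M powr s * P powr (\<epsilon> - real k))"
      if AA: "A = Arc k q Q P" "A \<in> sets lborel" "A \<subseteq> Marc k q Q P" for A Arc
    proof -
      have "(LINT \<alpha>:A|lborel. cmod (fsum k \<alpha> P R) powr s)
        \<le> 2 powr (s - 1) * ((M * cd) powr s * (4 * (Q * P powr (- real k))) + (M * R) powr (s - 1) * Iq k s Arc q Q P R M)"
        unfolding cd_def Iq_def AA(1) using arc_bound[OF AA(2)[unfolded AA(1)] AA(3)[unfolded AA(1)] M1 R0 q1 s1 c0] .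
      also have "\<dots> \<le> 2 powr (s - 1) * (4 * K0 powr s * (Q * M powr s * P powr (\<epsilon> - real k)) + (M * R) powr (s - 1) * Iq k s Arc q Q P R M)"
        using key by (intro mult_left_mono add_right_mono) auto
      also have "\<dots> \<le> C * ((M * R) powr (s - 1) * Iq k s Arc q Q P R M + Q * M powr s * P powr (\<epsilon> - real k))"
      proof -
        have Y0: "(M * R) powr (s - 1) * Iq k s Arc q Q P R M \<ge> 0" using Iq_nonneg by simp
        have "4 * K0 powr s * (Q * M powr s * P powr (\<epsilon> - real k)) + (M * R) powr (s - 1) * Iq k s Arc q Q P R M
            \<le> (1 + 4 * K0 powr s) * ((M * R) powr (s - 1) * Iq k s Arc q Q P R M + Q * M powr s * P powr (\<epsilon> - real k))"
          using X0 Y0 by (simp add: algebra_simps)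
        then show ?thesis unfolding C_def by (simp add: mult.assoc)
      qed
      finally show ?thesis .
    qed
    have N: "(LINT \<alpha>:Narc k q Q P|lborel. cmod (fsum k \<alpha> P R) powr s)
         \<le> C * ((M * R) powr (s - 1) * Iq k s Narc q Q P R M + Q * M powr s * P powr (\<epsilon> - real k))"
      using fin[of "Narc k q Q P" Narc] Narc_sets[of k q Q P] Narc_sub[of k q Q P] by blast
    have Mc: "(LINT \<alpha>:Marc k q Q P|lborel. cmod (fsum k \<alpha> P R) powr s)
         \<le> C * ((M * R) powr (s - 1) * Iq k s Marc q Q P R M + Q * M powr s * P powr (\<epsilon> - real k))"
      using fin[of "Marc k q Q P" Marc] Marc_sets[of k q Q P] by blast
    show "(LINT \<alpha>:Narc k q Q P|lborel. cmod (fsum k \<alpha> P R) powr s)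
         \<le> C * ((M * R) powr (s - 1) * Iq k s Narc q Q P R M
                + Q * M powr s * P powr (\<epsilon> - real k))
     \<and> (LINT \<alpha>:Marc k q Q P|lborel. cmod (fsum k \<alpha> P R) powr s)
         \<le> C * ((M * R) powr (s - 1) * Iq k s Marc q Q P R M
                + Q * M powr s * P powr (\<epsilon> - real k))" using N Mc by blast
  qed
qed

end
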